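(* Let $G$ be a finite group and let $g\mapsto U_g$ be a unitary representation of $G$ on a finite-dimensional Hilbert space $\mathcal{H}$. Let $\mathcal{R}$ be a finite-dimensional reference Hilbert space, and suppose that, with $\hat{G}$ the set of inequivalent irreducible representations of $G$, there is a unitary identification $$\mathcal{H}\otimes\mathcal{R}\cong\bigoplus_{\mu\in\hat G}\mathcal{H}_\mu\otimes\mathbb{C}^{d_\mu},$$ under which $U_g\otimes I_{\mathcal{R}}$ acts as $\bigoplus_{\mu\in\hat G}U^\mu_g\otimes I_{\mathbb{C}^{d_\mu}}$, where $U^\mu$ is the irreducible representation $\mu$ on $\mathcal{H}_\mu$ and $d_\mu=\dim\mathcal{H}_\mu$. For each $\mu$ fix orthonormal bases $\{|\psi^\mu_j\rangle\}_{j=1}^{d_\mu}$ of $\mathcal{H}_\mu$ and $\{|\phi^\mu_j\rangle\}_{j=1}^{d_\mu}$ of $\mathbb{C}^{d_\mu}$, and let $|V_\mu\rangle\!\rangle:=\sum_{j=1}^{d_\mu}|\psi^\mu_j\rangle|\phi^\mu_j\rangle\in\mathcal{H}_\mu\otimes\mathbb{C}^{d_\mu}$. Let $$|\psi\rangle=\bigoplus_{\mu\in\hat G}\frac{a_\mu}{\sqrt{d_\mu}}|V_\mu\rangle\!\rangle\in\mathcal{H}\otimes\mathcal{R},\qquad a_\mu\in\mathbb{C},\ \sum_{\mu}|a_\mu|^2=1,$$ and let $\mu_0\in\hat G$ be such that $d_{\mu_0}|a_{\mu_0}|\ge d_\mu|a_\mu|$ for all $\mu\in\hat G$. For $g\in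 G$ set $|u_g\rangle:=(U_g\otimes I_{\mathcal{R}})|\psi\rangle$. If $$d_{\mu_0}|a_{\mu_0}|\le\sum_{\mu\in\hat G,\ \mu\neq\mu_0}d_\mu|a_\mu|,$$ then conclusive single-state exclusion of the set $\{|u_g\rangle: g\in G\}$ can be done, i.e., there exists a POVM $\{M_g\}_{g\in G}$ on $\mathcal{H}\otimes\mathcal{R}$ (so $M_g\ge 0$ and $\sum_{g\in G}M_g=I$) such that $\langle u_g|M_g|u_g\rangle=0$ for every $g\in G$.
   Context: Conclusive single-state exclusion of a finite set of pure states $\{|u_g\rangle\}_{g\in G}$ means the existence of a POVM $\{M_g\}_{g\in G}$ (positive semidefinite operators summing to the identity) with $\operatorname{tr}[M_g|u_g\rangle\langle u_g|]=0$ for all $g$; equivalently, the minimum of $\sum_g\operatorname{tr}[M_g|u_g\rangle\langle u_g|]$ over all POVMs is $0$. The vector $|V_\mu\rangle\!\rangle$ is an (unnormalized) maximally entangled vector between the irreducible space $\mathcal{H}_\mu$ and the multiplicity space $\mathbb{C}^{d_\mu}$. *)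

theory Defs
  imports "HOL-Algebra.Group" "Jordan_Normal_Form.Matrix"
begin

text \<open>Hilbert spaces of dimension n are modelled as C^n (complex vec of length n),
  operators as complex matrices.\<close>

definition adj :: "complex mat \<Rightarrow> complex mat" where
  "adj A = mat (dim_col A) (dim_row A) (\<lambda>(i,j). cnj (A $$ (j,i)))"

definition unitary_mat :: "nat \<Rightarrow> complex mat \<Rightarrow> bool" where
  "unitary_mat n A \<longleftrightarrow> A \<in> carrier_mat n n \<and> adj A * A = 1\<^sub>m n \<and> A * adj A = 1\<^sub>m n"

text \<open>Inner product, antilinear in the first argument: inner v w = <v|w>.\<close>
definition inner :: "complex vec \<Rightarrow> complex vec \<Rightarrow> complex" where
  "inner v w = (\<Sum>i<dim_vec v. cnj (v $ i) * w $ i)"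

definition orthonormal :: "nat \<Rightarrow> (nat \<Rightarrow> complex vec) \<Rightarrow> nat \<Rightarrow> bool" where
  "orthonormal n vs c \<longleftrightarrow> (\<forall>j<c. vs j \<in> carrier_vec n) \<and>
     (\<forall>j<c. \<forall>l<c. inner (vs j) (vs l) = (if j = l then 1 else 0))"

text \<open>An orthonormal basis of C^n: n orthonormal vectors (which necessarily span C^n).\<close>
definition orthonormal_basis :: "nat \<Rightarrow> (nat \<Rightarrow> complex vec) \<Rightarrow> bool" where
  "orthonormal_basis n vs \<longleftrightarrow> orthonormal n vs n"

definition psd :: "nat \<Rightarrow> complex mat \<Rightarrow> bool" where
  "psd n M \<longleftrightarrow> M \<in> carrier_mat n n \<and> adj M = M \<and>
     (\<forall>v\<in>carrier_vec n. 0 \<le> Re (inner v (M *\<^sub>v v)) \<and> Im (inner v (M *\<^sub>v v)) = 0)"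

text \<open>Kronecker (tensor) products; index (x,y) of C^a \<otimes> C^b is x*b+y.\<close>
definition kron :: "complex mat \<Rightarrow> complex mat \<Rightarrow> complex mat" where
  "kron A B = mat (dim_row A * dim_row B) (dim_col A * dim_col B)
     (\<lambda>(i,j). A $$ (i div dim_row B, j div dim_col B) * B $$ (i mod dim_row B, j mod dim_col B))"

definition kron_vec :: "complex vec \<Rightarrow> complex vec \<Rightarrow> complex vec" where
  "kron_vec v w = vec (dim_vec v * dim_vec w) (\<lambda>i. v $ (i div dim_vec w) * w $ (i mod dim_vec w))"

definition ment_vec :: "nat \<Rightarrow> (nat \<Rightarrow> complex vec) \<Rightarrow> (nat \<Rightarrow> complex vec) \<Rightarrow> complex vec" where
  "ment_vec D ps ph = vec (D * D) (\<lambda>r. \<Sum>j<D. kron_vec (ps j) (ph j) $ r)"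

definition blk_off :: "(nat \<Rightarrow> nat) \<Rightarrow> nat \<Rightarrow> nat" where
  "blk_off d i = (\<Sum>j<i. d j * d j)"

definition blk_of :: "(nat \<Rightarrow> nat) \<Rightarrow> nat \<Rightarrow> nat" where
  "blk_of d r = (LEAST i. r < blk_off d (Suc i))"

definition blk_vec :: "nat \<Rightarrow> (nat \<Rightarrow> nat) \<Rightarrow> (nat \<Rightarrow> complex vec) \<Rightarrow> complex vec" where
  "blk_vec k d v = vec (blk_off d k) (\<lambda>r. v (blk_of d r) $ (r - blk_off d (blk_of d r)))"

definition blk_diag :: "nat \<Rightarrow> (nat \<Rightarrow> nat) \<Rightarrow> (nat \<Rightarrow> complex mat) \<Rightarrow> complex mat" where
  "blk_diag k d B = mat (blk_off d k) (blk_off d k) (\<lambda>(r,s).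
     if blk_of d r = blk_of d s
     then B (blk_of d r) $$ (r - blk_off d (blk_of d r), s - blk_off d (blk_of d s))
     else 0)"

definition mat_rep :: "('g, 'b) monoid_scheme \<Rightarrow> nat \<Rightarrow> ('g \<Rightarrow> complex mat) \<Rightarrow> bool" where
  "mat_rep G n U \<longleftrightarrow> (\<forall>g\<in>carrier G. U g \<in> carrier_mat n n) \<and> U \<one>\<^bsub>G\<^esub> = 1\<^sub>m n \<and>
     (\<forall>g\<in>carrier G. \<forall>h\<in>carrier G. U (g \<otimes>\<^bsub>G\<^esub> h) = U g * U h)"

definition unitary_rep :: "('g, 'b) monoid_scheme \<Rightarrow> nat \<Rightarrow> ('g \<Rightarrow> complex mat) \<Rightarrow> bool" where
  "unitary_rep G n U \<longleftrightarrow> mat_rep G n U \<and> (\<forall>g\<in>carrier G. unitary_mat n (U g))"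

definition subspace :: "nat \<Rightarrow> complex vec set \<Rightarrow> bool" where
  "subspace n S \<longleftrightarrow> S \<subseteq> carrier_vec n \<and> 0\<^sub>v n \<in> S \<and>
     (\<forall>v\<in>S. \<forall>w\<in>S. v + w \<in> S) \<and> (\<forall>c. \<forall>v\<in>S. c \<cdot>\<^sub>v v \<in> S)"

definition invariant_subspace ::
  "('g, 'b) monoid_scheme \<Rightarrow> nat \<Rightarrow> ('g \<Rightarrow> complex mat) \<Rightarrow> complex vec set \<Rightarrow> bool" where
  "invariant_subspace G n U S \<longleftrightarrow> subspace n S \<and> (\<forall>g\<in>carrier G. \<forall>v\<in>S. U g *\<^sub>v v \<in> S)"

definition irreducible_rep :: "('g, 'b) monoid_scheme \<Rightarrow> nat \<Rightarrow> ('g \<Rightarrow> complex mat) \<Rightarrow> bool" where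
  "irreducible_rep G n U \<longleftrightarrow> mat_rep G n U \<and> 0 < n \<and>
     (\<forall>S. invariant_subspace G n U S \<longrightarrow> S = {0\<^sub>v n} \<or> S = carrier_vec n)"

definition equiv_rep ::
  "('g, 'b) monoid_scheme \<Rightarrow> nat \<Rightarrow> ('g \<Rightarrow> complex mat) \<Rightarrow> nat \<Rightarrow> ('g \<Rightarrow> complex mat) \<Rightarrow> bool" where
  "equiv_rep G n U n' V \<longleftrightarrow> n = n' \<and>
     (\<exists>T\<in>carrier_mat n n. invertible_mat T \<and> (\<forall>g\<in>carrier G. T * U g = V g * T))"

end

theory Submission
  imports Defs "Jordan_Normal_Form.Char_Poly"
begin

lemma adj_dim[simp]: "dim_row (adj A) = dim_col A" "dim_col (adj A) = dim_row A"
  unfolding adj_def by auto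
lemma adj_index[simp]: "i < dim_col A \<Longrightarrow> j < dim_row A \<Longrightarrow> adj A $$ (i,j) = cnj (A $$ (j,i))"
  unfolding adj_def by auto
lemma adj_carrier[simp]: "A \<in> carrier_mat r c \<Longrightarrow> adj A \<in> carrier_mat c r"
  unfolding adj_def by auto
lemma adj_adj[simp]: "adj (adj A) = A"
  by (rule eq_matI) auto
lemma adj_mult: assumes "A \<in> carrier_mat a b" "B \<in> carrier_mat b c"
  shows "adj (A * B) = adj B * adj A"
  by (rule eq_matI) (use assms in \<open>auto simp: scalar_prod_def mult.commute\<close>)
lemma adj_one[simp]: "adj (1\<^sub>m n) = 1\<^sub>m n"
  by (rule eq_matI) auto
lemma adj_smult: "adj (c \<cdot>\<^sub>m A) = cnj c \<cdot>\<^sub>m adj A"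
  by (rule eq_matI) auto
lemma adj_zero[simp]: "adj (0\<^sub>m a b) = 0\<^sub>m b a"
  by (rule eq_matI) auto

lemma massoc: "dim_col (A::'a::semiring_0 mat) = dim_row B \<Longrightarrow> dim_col B = dim_row C \<Longrightarrow> A * B * C = A * (B * C)"
  by (metis assoc_mult_mat carrier_matI)

lemma smult_smult_mat[simp]: "a \<cdot>\<^sub>m (b \<cdot>\<^sub>m A) = (a * b :: 'a :: semigroup_mult) \<cdot>\<^sub>m A"
  by (rule eq_matI) (auto simp: mult.assoc)

lemma smult_one_mat1[simp]: "(1::'a::monoid_mult) \<cdot>\<^sub>m A = A"
  by (rule eq_matI) auto

definition tr :: "complex mat \<Rightarrow> complex" where
  "tr A = (\<Sum>i<dim_row A. A $$ (i,i))"

lemma tr_comm: assumes "A \<in> carrier_mat a b" "B \<in> carrier_mat b a"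
  shows "tr (A * B) = tr (B * A)"
proof -
  have "tr (A * B) = (\<Sum>i<a. \<Sum>j<b. A $$ (i,j) * B $$ (j,i))"
    using assms unfolding tr_def by (auto simp: scalar_prod_def atLeast0LessThan)
  also have "\<dots> = (\<Sum>j<b. \<Sum>i<a. B $$ (j,i) * A $$ (i,j))"
    by (subst sum.swap) (simp add: mult.commute)
  also have "\<dots> = tr (B * A)"
    using assms unfolding tr_def by (auto simp: scalar_prod_def atLeast0LessThan)
  finally show ?thesis .
qed

lemma tr_smult_one: "tr (c \<cdot>\<^sub>m 1\<^sub>m n) = of_nat n * c"
  unfolding tr_def by simp

definition msum :: "('g \<Rightarrow> complex mat) \<Rightarrow> 'g set \<Rightarrow> nat \<Rightarrow> nat \<Rightarrow> complex mat" where
  "msum F I r c = mat r c (\<lambda>(p,q). \<Sum>g\<in>I. F g $$ (p,q))"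

lemma msum_carrier[simp]: "msum F I r c \<in> carrier_mat r c" unfolding msum_def by auto

lemma msum_mult_right: assumes "\<And>g. g \<in> I \<Longrightarrow> F g \<in> carrier_mat r c" "B \<in> carrier_mat c e"
  shows "msum F I r c * B = msum (\<lambda>g. F g * B) I r e"
proof (rule eq_matI)
  fix i j assume ij: "i < dim_row (msum (\<lambda>g. F g * B) I r e)" "j < dim_col (msum (\<lambda>g. F g * B) I r e)"
  hence i: "i < r" and j: "j < e" by (auto simp: msum_def)
  have "(msum F I r c * B) $$ (i,j) = (\<Sum>k<c. (\<Sum>g\<in>I. F g $$ (i,k)) * B $$ (k,j))"
    using i j assms by (auto simp: msum_def scalar_prod_def atLeast0LessThan)
  also have "\<dots> = (\<Sum>g\<in>I. \<Sum>k<c. F g $$ (i,k) * B $$ (k,j))"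
    by (simp add: sum_distrib_right sum.swap[of _ I])
  also have "\<dots> = msum (\<lambda>g. F g * B) I r e $$ (i,j)"
  proof -
    have "(F g * B) $$ (i,j) = (\<Sum>k<c. F g $$ (i,k) * B $$ (k,j))" if "g \<in> I" for g
      using assms(1)[OF that] assms(2) i j by (auto simp: scalar_prod_def atLeast0LessThan)
    thus ?thesis using i j by (auto simp: msum_def intro!: sum.cong)
  qed
  finally show "(msum F I r c * B) $$ (i,j) = msum (\<lambda>g. F g * B) I r e $$ (i,j)" .
qed (use assms in \<open>auto simp: msum_def\<close>)

lemma msum_mult_left: assumes "\<And>g. g \<in> I \<Longrightarrow> F g \<in> carrier_mat r c" "B \<in> carrier_mat e r"
  shows "B * msum F I r c = msum (\<lambda>g. B * F g) I e c"
proof (rule eq_matI)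
  fix i j assume ij: "i < dim_row (msum (\<lambda>g. B * F g) I e c)" "j < dim_col (msum (\<lambda>g. B * F g) I e c)"
  hence i: "i < e" and j: "j < c" by (auto simp: msum_def)
  have "(B * msum F I r c) $$ (i,j) = (\<Sum>k<r. B $$ (i,k) * (\<Sum>g\<in>I. F g $$ (k,j)))"
    using i j assms by (auto simp: msum_def scalar_prod_def atLeast0LessThan)
  also have "\<dots> = (\<Sum>g\<in>I. \<Sum>k<r. B $$ (i,k) * F g $$ (k,j))"
    by (simp add: sum_distrib_left sum.swap[of _ I])
  also have "\<dots> = msum (\<lambda>g. B * F g) I e c $$ (i,j)"
  proof -
    have "(B * F g) $$ (i,j) = (\<Sum>k<r. B $$ (i,k) * F g $$ (k,j))" if "g \<in> I" for g
      using assms(1)[OF that] assms(2) i j by (auto simp: scalar_prod_def atLeast0LessThan)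
    thus ?thesis using i j by (auto simp: msum_def intro!: sum.cong)
  qed
  finally show "(B * msum F I r c) $$ (i,j) = msum (\<lambda>g. B * F g) I e c $$ (i,j)" .
qed (use assms in \<open>auto simp: msum_def\<close>)

lemma msum_cong: "(\<And>g. g \<in> I \<Longrightarrow> F g = F' g) \<Longrightarrow> msum F I r c = msum F' I r c"
  unfolding msum_def by (auto intro!: sum.cong)

lemma tr_msum: assumes FC: "\<And>g. g \<in> I \<Longrightarrow> F g \<in> carrier_mat r r" shows "tr (msum F I r r) = (\<Sum>g\<in>I. tr (F g))"
proof -
  have "tr (F g) = (\<Sum>i<r. F g $$ (i,i))" if "g \<in> I" for g using FC[OF that] unfolding tr_def by auto
  thus ?thesis unfolding tr_def msum_def by (auto simp: sum.swap[of _ I])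
qed


lemma schur_scalar:
  fixes G :: "('g, 'b) monoid_scheme"
  assumes irr: "irreducible_rep G d V" and T: "T \<in> carrier_mat d d"
    and comm: "\<And>g. g \<in> carrier G \<Longrightarrow> T * V g = V g * T"
  shows "\<exists>c. T = c \<cdot>\<^sub>m 1\<^sub>m d"
proof -
  have d: "d > 0" and rep: "mat_rep G d V" and inv: "\<And>S. invariant_subspace G d V S \<Longrightarrow> S = {0\<^sub>v d} \<or> S = carrier_vec d"
    using irr unfolding irreducible_rep_def by auto
  have Vc: "\<And>g. g \<in> carrier G \<Longrightarrow> V g \<in> carrier_mat d d" using rep unfolding mat_rep_def by auto
  have ex_ev: "\<exists>c. eigenvalue T c"
  proof -
    from degree_monic_char_poly[OF T] have "degree (char_poly T) > 0" using d by auto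
    hence "\<not> constant (poly (char_poly T))" by (simp add: constant_degree)
    from fundamental_theorem_of_algebra[OF this] obtain c where "poly (char_poly T) c = 0" by auto
    thus ?thesis using eigenvalue_root_char_poly[OF T] by auto
  qed
  then obtain c where "eigenvalue T c" by auto
  then obtain v where ev: "eigenvector T v c" unfolding eigenvalue_def by auto
  have v: "v \<in> carrier_vec d" "v \<noteq> 0\<^sub>v d" "T *\<^sub>v v = c \<cdot>\<^sub>v v" using ev T unfolding eigenvector_def by auto
  define S where "S = {w \<in> carrier_vec d. T *\<^sub>v w = c \<cdot>\<^sub>v w}"
  have S1: "S \<subseteq> carrier_vec d" "0\<^sub>v d \<in> S" unfolding S_def using T by auto
  have S2: "x + y \<in> S" if "x \<in> S" "y \<in> S" for x y
    using that T unfolding S_def by (auto simp: mult_add_distrib_mat_vec smult_add_distrib_vec)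
  have S3: "e \<cdot>\<^sub>v x \<in> S" if "x \<in> S" for e x
    using that T unfolding S_def by (auto simp: mult_mat_vec smult_smult_assoc mult.commute)
  have S4: "V g *\<^sub>v x \<in> S" if g: "g \<in> carrier G" and x: "x \<in> S" for g x
  proof -
    have xc: "x \<in> carrier_vec d" and Tx: "T *\<^sub>v x = c \<cdot>\<^sub>v x" using x unfolding S_def by auto
    have "T *\<^sub>v (V g *\<^sub>v x) = (T * V g) *\<^sub>v x" using T Vc[OF g] xc by auto
    also have "\<dots> = (V g * T) *\<^sub>v x" using comm[OF g] by simp
    also have "\<dots> = V g *\<^sub>v (T *\<^sub>v x)" using T Vc[OF g] xc by auto
    also have "\<dots> = c \<cdot>\<^sub>v (V g *\<^sub>v x)" using xc Vc[OF g] Tx by (auto simp: mult_mat_vec)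
    finally show ?thesis using Vc[OF g] xc unfolding S_def by auto
  qed
  have "invariant_subspace G d V S"
    unfolding invariant_subspace_def subspace_def using S1 by (simp add: S2 S3 S4)
  from inv[OF this] have "S = carrier_vec d" using v unfolding S_def by auto
  hence all: "\<And>w. w \<in> carrier_vec d \<Longrightarrow> T *\<^sub>v w = c \<cdot>\<^sub>v w" unfolding S_def by auto
  show ?thesis
  proof (intro exI eq_matI)
    fix i j assume i: "i < dim_row (c \<cdot>\<^sub>m 1\<^sub>m d)" and j: "j < dim_col (c \<cdot>\<^sub>m 1\<^sub>m d)"
    have "T $$ (i, j) = (T *\<^sub>v unit_vec d j) $ i" using T i j by simp
    also have "\<dots> = (c \<cdot>\<^sub>v unit_vec d j) $ i" using all[of "unit_vec d j"] by simp
    finally show "T $$ (i, j) = (c \<cdot>\<^sub>m 1\<^sub>m d) $$ (i, j)" using i j by simp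
  qed (use T in auto)
qed


lemma urep_facts: assumes "unitary_rep G d V" "g \<in> carrier G"
  shows "V g \<in> carrier_mat d d" "adj (V g) * V g = 1\<^sub>m d" "V g * adj (V g) = 1\<^sub>m d"
  using assms unfolding unitary_rep_def mat_rep_def unitary_mat_def by auto

lemma urep_mult: assumes "unitary_rep G d V" "g \<in> carrier G" "h \<in> carrier G"
  shows "V (g \<otimes>\<^bsub>G\<^esub> h) = V g * V h"
  using assms unfolding unitary_rep_def mat_rep_def by auto

lemma urep_one: assumes "unitary_rep G d V" shows "V \<one>\<^bsub>G\<^esub> = 1\<^sub>m d"
  using assms unfolding unitary_rep_def mat_rep_def by auto

lemma urep_inv: assumes grp: "group G" and U: "unitary_rep G d V" and g: "g \<in> carrier G"
  shows "V (inv\<^bsub>G\<^esub> g) = adj (V g)"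
proof -
  have ig: "inv\<^bsub>G\<^esub> g \<in> carrier G" using group.inv_closed[OF grp g] .
  have "V (inv\<^bsub>G\<^esub> g) * V g = 1\<^sub>m d"
    using urep_mult[OF U ig g, symmetric] group.l_inv[OF grp g] urep_one[OF U] by simp
  hence "V (inv\<^bsub>G\<^esub> g) = V (inv\<^bsub>G\<^esub> g) * (V g * adj (V g))"
    using urep_facts[OF U g] urep_facts[OF U ig] by simp
  also have "\<dots> = (V (inv\<^bsub>G\<^esub> g) * V g) * adj (V g)"
    using urep_facts[OF U g] urep_facts[OF U ig] by (simp add: assoc_mult_mat[of _ d d _ d _ d])
  also have "\<dots> = adj (V g)" using \<open>V (inv\<^bsub>G\<^esub> g) * V g = 1\<^sub>m d\<close> urep_facts[OF U g] by simp
  finally show ?thesis .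
qed

lemma sum_group_shift: assumes grp: "group G" and h: "h \<in> carrier G"
  shows "(\<Sum>g\<in>carrier G. f (h \<otimes>\<^bsub>G\<^esub> g)) = (\<Sum>g\<in>carrier G. (f g :: 'c :: comm_monoid_add))"
proof -
  have "bij_betw (\<lambda>g. h \<otimes>\<^bsub>G\<^esub> g) (carrier G) (carrier G)"
  proof -
    interpret group G by fact
    show ?thesis
    by (rule bij_betw_byWitness[where f' = "\<lambda>g. inv\<^bsub>G\<^esub> h \<otimes>\<^bsub>G\<^esub> g"])
      (use h in \<open>auto simp: m_assoc[symmetric]\<close>)
  qed
  from sum.reindex_bij_betw[OF this] show ?thesis .
qed

definition twirl :: "('g, 'b) monoid_scheme \<Rightarrow> ('g \<Rightarrow> complex mat) \<Rightarrow> ('g \<Rightarrow> complex mat)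
   \<Rightarrow> complex mat \<Rightarrow> nat \<Rightarrow> nat \<Rightarrow> complex mat" where
  "twirl G V V' A d d' = msum (\<lambda>g. V g * A * adj (V' g)) (carrier G) d d'"

lemma twirl_intertw:
  assumes grp: "group G" and U: "unitary_rep G d V" and U': "unitary_rep G d' V'"
    and A: "A \<in> carrier_mat d d'" and h: "h \<in> carrier G"
  shows "twirl G V V' A d d' * V' h = V h * twirl G V V' A d d'"
proof -
  let ?S = "twirl G V V' A d d'"
  note Vh = urep_facts[OF U h] and V'h = urep_facts[OF U' h]
  have Fc: "\<And>g. g \<in> carrier G \<Longrightarrow> V g * A * adj (V' g) \<in> carrier_mat d d'"
    using A urep_facts[OF U] urep_facts[OF U'] by (meson adj_carrier mult_carrier_mat)
  have "V h * ?S * adj (V' h) = msum (\<lambda>g. V h * (V g * A * adj (V' g)) * adj (V' h)) (carrier G) d d'"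
    unfolding twirl_def
    by (subst msum_mult_left[OF Fc Vh(1)], simp, subst msum_mult_right[where c = d'],
        use Fc Vh V'h in \<open>auto\<close>)
  also have "\<dots> = msum (\<lambda>g. V (h \<otimes>\<^bsub>G\<^esub> g) * A * adj (V' (h \<otimes>\<^bsub>G\<^esub> g))) (carrier G) d d'"
  proof (rule msum_cong)
    fix g assume g: "g \<in> carrier G"
    note Vg = urep_facts[OF U g] and V'g = urep_facts[OF U' g]
    have "V (h \<otimes>\<^bsub>G\<^esub> g) * A * adj (V' (h \<otimes>\<^bsub>G\<^esub> g)) = V h * V g * A * (adj (V' g) * adj (V' h))"
      using urep_mult[OF U h g] urep_mult[OF U' h g] adj_mult[OF V'h(1) V'g(1)] by simp
    also have "\<dots> = V h * (V g * A * adj (V' g)) * adj (V' h)"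
      using Vg(1) Vh(1) V'g(1) V'h(1) A by (simp add: massoc carrier_matD)
    finally show "V h * (V g * A * adj (V' g)) * adj (V' h) = V (h \<otimes>\<^bsub>G\<^esub> g) * A * adj (V' (h \<otimes>\<^bsub>G\<^esub> g))" by simp
  qed
  also have "\<dots> = ?S" unfolding twirl_def msum_def
    by (rule cong[of "mat d d'"], simp, rule ext, clarify, rule sum_group_shift[OF grp h, where f = "\<lambda>g. (V g * A * adj (V' g)) $$ _"])
  finally have eq: "V h * ?S * adj (V' h) = ?S" .
  have Sc: "?S \<in> carrier_mat d d'" unfolding twirl_def by simp
  have "?S * V' h = V h * ?S * adj (V' h) * V' h" using eq by simp
  also have "\<dots> = V h * ?S * (adj (V' h) * V' h)" using Sc Vh(1) V'h(1) by (simp add: massoc carrier_matD)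
  also have "\<dots> = V h * ?S" using V'h Sc Vh by simp
  finally show ?thesis .
qed


lemma cnj_mult_self: "cnj z * z = complex_of_real ((cmod z)\<^sup>2)"
  by (metis complex_norm_square mult.commute)

lemma adj_mult_self_zero: assumes X: "X \<in> carrier_mat r c" and Z: "adj X * X = 0\<^sub>m c c"
  shows "X = 0\<^sub>m r c"
proof (rule eq_matI)
  fix p q assume p: "p < dim_row (0\<^sub>m r c)" and q: "q < dim_col (0\<^sub>m r c)"
  hence p: "p < r" and q: "q < c" by auto
  have "(adj X * X) $$ (q,q) = (\<Sum>i<r. complex_of_real ((cmod (X $$ (i,q)))\<^sup>2))"
    using X q by (auto simp: scalar_prod_def atLeast0LessThan cnj_mult_self simp del: of_real_power intro!: sum.cong)
  hence "(\<Sum>i<r. complex_of_real ((cmod (X $$ (i,q)))\<^sup>2)) = 0" using Z q by simp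
  hence "(\<Sum>i<r. (cmod (X $$ (i,q)))\<^sup>2) = 0" by (simp only: of_real_sum[symmetric] of_real_eq_0_iff)
  hence "\<forall>i\<in>{..<r}. (cmod (X $$ (i,q)))\<^sup>2 = 0" by (subst (asm) sum_nonneg_eq_0_iff) auto
  thus "X $$ (p,q) = 0\<^sub>m r c $$ (p,q)" using p q by auto
qed (use X in auto)

lemma smult_cancel_mat: assumes "c \<cdot>\<^sub>m X = c' \<cdot>\<^sub>m X" "X \<in> carrier_mat r s" "X \<noteq> 0\<^sub>m r s"
  shows "c = (c' :: complex)"
proof -
  from assms(2,3) obtain i j where ij: "i < r" "j < s" "X $$ (i,j) \<noteq> 0"
    by (metis (no_types, lifting) carrier_matD eq_matI index_zero_mat(1,2,3))
  have "(c \<cdot>\<^sub>m X) $$ (i,j) = (c' \<cdot>\<^sub>m X) $$ (i,j)" using assms(1) by simp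
  thus ?thesis using ij assms(2) by auto
qed

lemma twirl_carrier[simp]: "twirl G V V' A d d' \<in> carrier_mat d d'" unfolding twirl_def by simp

lemma twirl_same:
  assumes grp: "group G" and fin: "finite (carrier G)" and U: "unitary_rep G d V" and irr: "irreducible_rep G d V"
    and A: "A \<in> carrier_mat d d"
  shows "twirl G V V A d d = (of_nat (card (carrier G)) * tr A / of_nat d) \<cdot>\<^sub>m 1\<^sub>m d"
proof -
  let ?S = "twirl G V V A d d"
  have d: "d > 0" using irr unfolding irreducible_rep_def by auto
  obtain c where c: "?S = c \<cdot>\<^sub>m 1\<^sub>m d"
    using schur_scalar[OF irr twirl_carrier twirl_intertw[OF grp U U A]] by blast
  have Fc: "\<And>g. g \<in> carrier G \<Longrightarrow> V g * A * adj (V g) \<in> carrier_mat d d"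
    using A urep_facts[OF U] by (meson adj_carrier mult_carrier_mat)
  have "tr ?S = (\<Sum>g\<in>carrier G. tr (V g * A * adj (V g)))"
    unfolding twirl_def by (rule tr_msum[OF Fc])
  also have "\<dots> = (\<Sum>g\<in>carrier G. tr A)"
  proof (rule sum.cong[OF refl])
    fix g assume g: "g \<in> carrier G"
    note Vg = urep_facts[OF U g]
    have "tr (V g * A * adj (V g)) = tr (adj (V g) * (V g * A))"
      by (rule tr_comm[of _ d d]) (use Vg A in auto)
    also have "\<dots> = tr A" using Vg A by (simp add: massoc[symmetric] carrier_matD)
    finally show "tr (V g * A * adj (V g)) = tr A" .
  qed
  also have "\<dots> = of_nat (card (carrier G)) * tr A" by simp
  finally have "of_nat d * c = of_nat (card (carrier G)) * tr A" using c tr_smult_one by simp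
  hence "c = of_nat (card (carrier G)) * tr A / of_nat d" using d by (simp add: field_simps)
  thus ?thesis using c by simp
qed

lemma twirl_inequiv:
  assumes grp: "group G" and U: "unitary_rep G d V" and irr: "irreducible_rep G d V"
    and U': "unitary_rep G d' V'" and irr': "irreducible_rep G d' V'"
    and ne: "\<not> equiv_rep G d' V' d V"
    and A: "A \<in> carrier_mat d d'"
  shows "twirl G V V' A d d' = 0\<^sub>m d d'"
proof (rule ccontr)
  let ?S = "twirl G V V' A d d'"
  assume nz: "?S \<noteq> 0\<^sub>m d d'"
  have Sc: "?S \<in> carrier_mat d d'" by simp
  note Sd = carrier_matD[OF Sc]
  have int: "\<And>h. h \<in> carrier G \<Longrightarrow> ?S * V' h = V h * ?S" by (rule twirl_intertw[OF grp U U' A])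
  have int2: "adj ?S * V h = V' h * adj ?S" if h: "h \<in> carrier G" for h
  proof -
    have ih: "inv\<^bsub>G\<^esub> h \<in> carrier G" using group.inv_closed[OF grp h] .
    have "?S * adj (V' h) = adj (V h) * ?S" using int[OF ih] urep_inv[OF grp U h] urep_inv[OF grp U' h] by simp
    hence "adj (?S * adj (V' h)) = adj (adj (V h) * ?S)" by simp
    thus ?thesis using adj_mult[OF Sc adj_carrier[OF urep_facts(1)[OF U' h]]]
        adj_mult[OF adj_carrier[OF urep_facts(1)[OF U h]] Sc] by simp
  qed
  obtain l where l: "adj ?S * ?S = l \<cdot>\<^sub>m 1\<^sub>m d'"
  proof -
    have "adj ?S * ?S * V' h = V' h * (adj ?S * ?S)" if h: "h \<in> carrier G" for h
    proof -
      note Vh = carrier_matD[OF urep_facts(1)[OF U h]] and V'h = carrier_matD[OF urep_facts(1)[OF U' h]]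
      have "adj ?S * ?S * V' h = adj ?S * (?S * V' h)" using Sd V'h by (simp add: massoc)
      also have "\<dots> = adj ?S * V h * ?S" using int[OF h] Sd Vh by (simp add: massoc)
      also have "\<dots> = V' h * adj ?S * ?S" using int2[OF h] by simp
      also have "\<dots> = V' h * (adj ?S * ?S)" using Sd V'h by (simp add: massoc)
      finally show ?thesis .
    qed
    from schur_scalar[OF irr' _ this] Sc show ?thesis using that by (metis adj_carrier mult_carrier_mat)
  qed
  obtain m where m: "?S * adj ?S = m \<cdot>\<^sub>m 1\<^sub>m d"
  proof -
    have "?S * adj ?S * V h = V h * (?S * adj ?S)" if h: "h \<in> carrier G" for h
    proof -
      note Vh = carrier_matD[OF urep_facts(1)[OF U h]] and V'h = carrier_matD[OF urep_facts(1)[OF U' h]]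
      have "?S * adj ?S * V h = ?S * (adj ?S * V h)" using Sd Vh by (simp add: massoc)
      also have "\<dots> = ?S * V' h * adj ?S" using int2[OF h] Sd V'h by (simp add: massoc)
      also have "\<dots> = V h * ?S * adj ?S" using int[OF h] by simp
      also have "\<dots> = V h * (?S * adj ?S)" using Sd Vh by (simp add: massoc)
      finally show ?thesis .
    qed
    from schur_scalar[OF irr _ this] Sc show ?thesis using that by (metis adj_carrier mult_carrier_mat)
  qed
  have l0: "l \<noteq> 0"
  proof
    assume "l = 0" hence "adj ?S * ?S = 0\<^sub>m d' d'" using l by auto
    from adj_mult_self_zero[OF Sc this] nz show False by simp
  qed
  have aSc: "adj ?S \<in> carrier_mat d' d" by simp
  have aSnz: "adj ?S \<noteq> 0\<^sub>m d' d" using nz by (metis adj_adj adj_zero)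
  have m0: "m \<noteq> 0"
  proof
    assume "m = 0" hence "adj (adj ?S) * adj ?S = 0\<^sub>m d d" using m by auto
    from adj_mult_self_zero[OF aSc this] aSnz show False by simp
  qed
  have "adj ?S * (?S * adj ?S) = (adj ?S * ?S) * adj ?S" using Sd by (simp add: massoc)
  hence "m \<cdot>\<^sub>m adj ?S = l \<cdot>\<^sub>m adj ?S" unfolding l m using aSc
    by (simp add: mult_smult_distrib[OF aSc, of _ d] mult_smult_assoc_mat[of _ d' d'] Sd)
  from smult_cancel_mat[OF this aSc aSnz] have ml: "m = l" .
  have "tr (adj ?S * ?S) = tr (?S * adj ?S)" by (rule tr_comm[OF aSc Sc])
  hence "of_nat d' * l = of_nat d * l" unfolding l m ml tr_smult_one .
  hence dd: "d' = d" using l0 by simp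
  have "equiv_rep G d' V' d V"
    unfolding equiv_rep_def
  proof (intro conjI bexI[of _ ?S] ballI)
    show "d' = d" by fact
    show "?S \<in> carrier_mat d' d'" using Sc dd by simp
    show "?S * V' g = V g * ?S" if "g \<in> carrier G" for g using int[OF that] .
    show "invertible_mat ?S" unfolding invertible_mat_def inverts_mat_def
    proof (intro conjI exI[of _ "(1 / l) \<cdot>\<^sub>m adj ?S"])
      show "square_mat ?S" using Sd dd by simp
      show "?S * ((1 / l) \<cdot>\<^sub>m adj ?S) = 1\<^sub>m (dim_row ?S)"
        using mult_smult_distrib[OF Sc aSc] m ml l0 Sd by simp
      have "((1 / l) \<cdot>\<^sub>m adj ?S) * ?S = 1\<^sub>m d'"
        using mult_smult_assoc_mat[OF aSc Sc] l l0 by simp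
      thus "((1 / l) \<cdot>\<^sub>m adj ?S) * ?S = 1\<^sub>m (dim_row ((1 / l) \<cdot>\<^sub>m adj ?S))" using Sd by simp
    qed
  qed
  with ne show False by simp
qed


definition outer :: "complex vec \<Rightarrow> complex vec \<Rightarrow> complex mat" where
  "outer v w = mat (dim_vec v) (dim_vec w) (\<lambda>(a,b). v $ a * cnj (w $ b))"

lemma outer_carrier[simp]: "v \<in> carrier_vec r \<Longrightarrow> w \<in> carrier_vec c \<Longrightarrow> outer v w \<in> carrier_mat r c"
  unfolding outer_def by auto

lemma mult_outer: assumes "A \<in> carrier_mat r c" "v \<in> carrier_vec c"
  shows "A * outer v w = outer (A *\<^sub>v v) w"
  by (rule eq_matI) (use assms in \<open>auto simp: outer_def scalar_prod_def sum_distrib_right mult.assoc\<close>)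

lemma outer_mult_adj: assumes "B \<in> carrier_mat c c'" "w \<in> carrier_vec c'"
  shows "outer v w * adj B = outer v (B *\<^sub>v w)"
  by (rule eq_matI) (use assms in \<open>auto simp: outer_def scalar_prod_def sum_distrib_left mult.assoc mult.commute intro!: sum.cong\<close>)

lemma tr_outer: assumes "v \<in> carrier_vec c" "w \<in> carrier_vec c"
  shows "tr (outer v w) = inner w v"
  using assms unfolding tr_def outer_def inner_def by (auto simp: mult.commute)

lemma twirl_outer_entry:
  assumes U: "unitary_rep G d V" and U': "unitary_rep G d' V'"
    and v: "v \<in> carrier_vec d" and w: "w \<in> carrier_vec d'" and p: "p < d" and q: "q < d'"
  shows "twirl G V V' (outer v w) d d' $$ (p,q) = (\<Sum>g\<in>carrier G. (V g *\<^sub>v v) $ p * cnj ((V' g *\<^sub>v w) $ q))"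
proof -
  have "V g * outer v w * adj (V' g) = outer (V g *\<^sub>v v) (V' g *\<^sub>v w)" if g: "g \<in> carrier G" for g
    using mult_outer[OF urep_facts(1)[OF U g] v] outer_mult_adj[OF urep_facts(1)[OF U' g] w] by simp
  moreover have "outer (V g *\<^sub>v v) (V' g *\<^sub>v w) $$ (p,q) = (V g *\<^sub>v v) $ p * cnj ((V' g *\<^sub>v w) $ q)"
    if g: "g \<in> carrier G" for g
    using p q urep_facts(1)[OF U g] urep_facts(1)[OF U' g] by (simp add: outer_def)
  ultimately show ?thesis using p q unfolding twirl_def msum_def by (auto intro!: sum.cong)
qed

lemma ortho_diff:
  assumes grp: "group G" and U: "unitary_rep G d V" and irr: "irreducible_rep G d V"
    and U': "unitary_rep G d' V'" and irr': "irreducible_rep G d' V'"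
    and ne: "\<not> equiv_rep G d' V' d V"
    and v: "v \<in> carrier_vec d" and w: "w \<in> carrier_vec d'" and p: "p < d" and q: "q < d'"
  shows "(\<Sum>g\<in>carrier G. (V g *\<^sub>v v) $ p * cnj ((V' g *\<^sub>v w) $ q)) = 0"
  using twirl_outer_entry[OF U U' v w p q] twirl_inequiv[OF grp U irr U' irr' ne outer_carrier[OF v w]] p q
  by simp

lemma ortho_same:
  assumes grp: "group G" and fin: "finite (carrier G)" and U: "unitary_rep G d V" and irr: "irreducible_rep G d V"
    and v: "v \<in> carrier_vec d" and w: "w \<in> carrier_vec d" and p: "p < d" and q: "q < d"
  shows "(\<Sum>g\<in>carrier G. (V g *\<^sub>v v) $ p * cnj ((V g *\<^sub>v w) $ q))
     = (if p = q then of_nat (card (carrier G)) * inner w v / of_nat d else 0)"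
  using twirl_outer_entry[OF U U v w p q] twirl_same[OF grp fin U irr outer_carrier[OF v w]] p q
    tr_outer[OF v w] by (cases "p = q") auto


lemma sum_add_split: "(\<Sum>r<(a::nat)+b. f r) = (\<Sum>r<a. f r) + (\<Sum>u<b. f (a + u))"
  by (induction b) (auto simp: add.assoc)

lemma sum_pairs: "(\<Sum>t<(a::nat)*b. f t) = (\<Sum>p<a. \<Sum>q<b. f (p*b + q))"
proof (induction a)
  case (Suc a)
  have "(\<Sum>t<Suc a * b. f t) = (\<Sum>t<a*b + b. f t)" by (simp add: add.commute)
  also have "\<dots> = (\<Sum>t<a*b. f t) + (\<Sum>q<b. f (a*b + q))" by (rule sum_add_split)
  finally show ?case using Suc by simp
qed simp

lemma blk_off_Suc: "blk_off d (Suc i) = blk_off d i + d i * d i"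
  unfolding blk_off_def by simp

lemma blk_off_0[simp]: "blk_off d 0 = 0"
  unfolding blk_off_def by simp

lemma blk_off_mono: "i \<le> j \<Longrightarrow> blk_off d i \<le> blk_off d j"
  unfolding blk_off_def by (rule sum_mono2) auto

lemma blk_of_eq: assumes "u < d j * d j" shows "blk_of d (blk_off d j + u) = j"
  unfolding blk_of_def
proof (rule Least_equality)
  show "blk_off d j + u < blk_off d (Suc j)" using assms by (simp add: blk_off_Suc)
next
  fix i assume "blk_off d j + u < blk_off d (Suc i)"
  then show "j \<le> i" using blk_off_mono[of "Suc i" j d] by (cases "j \<le> i") auto
qed

lemma blk_decomp: assumes "r < blk_off d k"
  shows "\<exists>j<k. \<exists>u<d j * d j. r = blk_off d j + u"
  using assms
proof (induction k)
  case 0 thus ?case by (simp add: blk_off_def)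
next
  case (Suc k)
  show ?case
  proof (cases "r < blk_off d k")
    case True thus ?thesis using Suc.IH by (meson less_SucI)
  next
    case False
    hence "r - blk_off d k < d k * d k" "r = blk_off d k + (r - blk_off d k)"
      using Suc.prems by (auto simp: blk_off_Suc)
    thus ?thesis by blast
  qed
qed

lemma sum_blk: "(\<Sum>r<blk_off d k. f r) = (\<Sum>j<k. \<Sum>u<d j * d j. f (blk_off d j + u))"
  by (induction k) (auto simp: blk_off_Suc sum_add_split)

lemma blk_vec_dim[simp]: "dim_vec (blk_vec k d v) = blk_off d k"
  unfolding blk_vec_def by simp
lemma blk_vec_carrier[simp]: "blk_vec k d v \<in> carrier_vec (blk_off d k)"
  unfolding blk_vec_def by simp

lemma blk_vec_index: assumes "j < k" "u < d j * d j"
  shows "blk_vec k d v $ (blk_off d j + u) = v j $ u"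
proof -
  have "blk_off d j + u < blk_off d (Suc j)" using assms by (simp add: blk_off_Suc)
  also have "\<dots> \<le> blk_off d k" using assms by (intro blk_off_mono) auto
  finally show ?thesis unfolding blk_vec_def using blk_of_eq[where d=d, OF assms(2)] by simp
qed

lemma blk_diag_carrier[simp]: "blk_diag k d B \<in> carrier_mat (blk_off d k) (blk_off d k)"
  unfolding blk_diag_def by simp

lemma blk_diag_index: assumes "j < k" "u < d j * d j" "j' < k" "u' < d j' * d j'"
  shows "blk_diag k d B $$ (blk_off d j + u, blk_off d j' + u') = (if j = j' then B j $$ (u, u') else 0)"
proof -
  have lt: "blk_off d i + w < blk_off d k" if "i < k" "w < d i * d i" for i w
  proof -
    have "blk_off d i + w < blk_off d (Suc i)" using that by (simp add: blk_off_Suc)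
    also have "\<dots> \<le> blk_off d k" using that by (intro blk_off_mono) auto
    finally show ?thesis .
  qed
  show ?thesis unfolding blk_diag_def using lt[OF assms(1,2)] lt[OF assms(3,4)] blk_of_eq[where d=d, OF assms(2)] blk_of_eq[where d=d, OF assms(4)]
    by (cases "j = j'") simp_all
qed

lemma blk_in_range: assumes "j < k" "u < d j * d j" shows "blk_off d j + u < blk_off d k"
proof -
  have "blk_off d j + u < blk_off d (Suc j)" using assms by (simp add: blk_off_Suc)
  also have "\<dots> \<le> blk_off d k" using assms by (intro blk_off_mono) auto
  finally show ?thesis .
qed

lemma blk_mult: assumes B: "\<And>i. i < k \<Longrightarrow> B i \<in> carrier_mat (d i * d i) (d i * d i)"
  and v: "\<And>i. i < k \<Longrightarrow> v i \<in> carrier_vec (d i * d i)"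
  shows "blk_diag k d B *\<^sub>v blk_vec k d v = blk_vec k d (\<lambda>i. B i *\<^sub>v v i)"
proof (rule eq_vecI)
  show "dim_vec (blk_diag k d B *\<^sub>v blk_vec k d v) = dim_vec (blk_vec k d (\<lambda>i. B i *\<^sub>v v i))"
    by (simp add: blk_diag_def)
  fix r assume "r < dim_vec (blk_vec k d (\<lambda>i. B i *\<^sub>v v i))"
  hence r: "r < blk_off d k" by simp
  then obtain j u where ju: "j < k" "u < d j * d j" "r = blk_off d j + u" using blk_decomp by blast
  have "(blk_diag k d B *\<^sub>v blk_vec k d v) $ r = (\<Sum>s<blk_off d k. blk_diag k d B $$ (r, s) * blk_vec k d v $ s)"
    using r by (simp add: blk_diag_def scalar_prod_def atLeast0LessThan)
  also have "\<dots> = (\<Sum>j'<k. \<Sum>u'<d j' * d j'. (if j = j' then B j $$ (u, u') else 0) * v j' $ u')"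
    unfolding sum_blk using ju by (auto intro!: sum.cong simp: blk_diag_index blk_vec_index)
  also have "\<dots> = (\<Sum>j'<k. if j = j' then (\<Sum>u'<d j' * d j'. B j' $$ (u, u') * v j' $ u') else 0)"
    by (rule sum.cong) auto
  also have "\<dots> = (\<Sum>u'<d j * d j. B j $$ (u, u') * v j $ u')"
    using ju(1) by (simp add: sum.delta')
  also have "\<dots> = (B j *\<^sub>v v j) $ u" using B[OF ju(1)] v[OF ju(1)] ju(2) by (simp add: scalar_prod_def atLeast0LessThan)
  also have "\<dots> = blk_vec k d (\<lambda>i. B i *\<^sub>v v i) $ r" using ju by (simp add: blk_vec_index)
  finally show "(blk_diag k d B *\<^sub>v blk_vec k d v) $ r = blk_vec k d (\<lambda>i. B i *\<^sub>v v i) $ r" .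
qed

lemma inner_blk: assumes v: "\<And>i. i < k \<Longrightarrow> v i \<in> carrier_vec (d i * d i)"
  shows "inner (blk_vec k d v) (blk_vec k d w) = (\<Sum>i<k. inner (v i) (w i))"
proof -
  have "inner (v i) (w i) = (\<Sum>u<d i * d i. cnj (v i $ u) * w i $ u)" if "i < k" for i
    using v[OF that] unfolding inner_def by simp
  thus ?thesis unfolding inner_def blk_vec_dim sum_blk by (auto intro!: sum.cong simp: blk_vec_index)
qed


lemma ment_vec_alt: assumes "\<And>j. j < D \<Longrightarrow> ps j \<in> carrier_vec D" "\<And>j. j < D \<Longrightarrow> ph j \<in> carrier_vec D"
  shows "ment_vec D ps ph = vec (D*D) (\<lambda>t. \<Sum>j<D. ps j $ (t div D) * ph j $ (t mod D))"
proof -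
  have "kron_vec (ps j) (ph j) $ t = ps j $ (t div D) * ph j $ (t mod D)" if "j < D" "t < D * D" for j t
    using assms(1)[OF that(1)] assms(2)[OF that(1)] that unfolding kron_vec_def by simp
  thus ?thesis unfolding ment_vec_def by (intro eq_vecI) auto
qed

lemma ment_vec_carrier[simp]: "ment_vec D ps ph \<in> carrier_vec (D*D)"
  unfolding ment_vec_def by simp

lemma div_mod_pair: assumes "q < (D::nat)" shows "(p*D + q) div D = p" "(p*D + q) mod D = q"
  using assms by auto

lemma kron_ment: assumes A: "A \<in> carrier_mat D D"
  and ps: "\<And>j. j < D \<Longrightarrow> ps j \<in> carrier_vec D" and ph: "\<And>j. j < D \<Longrightarrow> ph j \<in> carrier_vec D"
  shows "kron A (1\<^sub>m D) *\<^sub>v ment_vec D ps ph = ment_vec D (\<lambda>j. A *\<^sub>v ps j) ph"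
proof -
  have Aps: "\<And>j. j < D \<Longrightarrow> A *\<^sub>v ps j \<in> carrier_vec D" using A ps by auto
  have mv1: "ment_vec D ps ph = vec (D*D) (\<lambda>t. \<Sum>j<D. ps j $ (t div D) * ph j $ (t mod D))"
    by (rule ment_vec_alt[OF ps ph])
  have mv2: "ment_vec D (\<lambda>j. A *\<^sub>v ps j) ph = vec (D*D) (\<lambda>t. \<Sum>j<D. (A *\<^sub>v ps j) $ (t div D) * ph j $ (t mod D))"
    by (rule ment_vec_alt[OF Aps ph])
  have entry: "(kron A (1\<^sub>m D) *\<^sub>v vec (D * D) (\<lambda>t. \<Sum>j<D. ps j $ (t div D) * ph j $ (t mod D))) $ t
      = vec (D * D) (\<lambda>t. \<Sum>j<D. (A *\<^sub>v ps j) $ (t div D) * ph j $ (t mod D)) $ t" if t: "t < D * D" for t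
  proof -
    have D: "D > 0" using t by (cases D) auto
    have tdm: "t div D < D" "t mod D < D" using t D by (auto simp: less_mult_imp_div_less)
    have "(kron A (1\<^sub>m D) *\<^sub>v vec (D * D) (\<lambda>t. \<Sum>j<D. ps j $ (t div D) * ph j $ (t mod D))) $ t
      = (\<Sum>s<D*D. A $$ (t div D, s div D) * (1\<^sub>m D) $$ (t mod D, s mod D) * (\<Sum>j<D. ps j $ (s div D) * ph j $ (s mod D)))"
      using A t D by (auto simp: kron_def scalar_prod_def atLeast0LessThan less_mult_imp_div_less intro!: sum.cong)
    also have "\<dots> = (\<Sum>p<D. \<Sum>q<D. A $$ (t div D, p) * (1\<^sub>m D) $$ (t mod D, q) * (\<Sum>j<D. ps j $ p * ph j $ q))"
      unfolding sum_pairs by (auto intro!: sum.cong simp: div_mod_pair)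
    also have "\<dots> = (\<Sum>p<D. A $$ (t div D, p) * (\<Sum>j<D. ps j $ p * ph j $ (t mod D)))"
    proof (rule sum.cong[OF refl])
      fix p assume p: "p \<in> {..<D}"
      have "(\<Sum>q<D. A $$ (t div D, p) * (1\<^sub>m D) $$ (t mod D, q) * (\<Sum>j<D. ps j $ p * ph j $ q))
         = (\<Sum>q<D. if t mod D = q then A $$ (t div D, p) * (\<Sum>j<D. ps j $ p * ph j $ q) else 0)"
        using tdm by (intro sum.cong) auto
      also have "\<dots> = A $$ (t div D, p) * (\<Sum>j<D. ps j $ p * ph j $ (t mod D))"
        using tdm by simp
      finally show "(\<Sum>q<D. A $$ (t div D, p) * (1\<^sub>m D) $$ (t mod D, q) * (\<Sum>j<D. ps j $ p * ph j $ q))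
         = A $$ (t div D, p) * (\<Sum>j<D. ps j $ p * ph j $ (t mod D))" .
    qed
    also have "\<dots> = (\<Sum>p<D. \<Sum>j<D. A $$ (t div D, p) * ps j $ p * ph j $ (t mod D))"
      by (simp add: sum_distrib_left mult.assoc)
    also have "\<dots> = (\<Sum>j<D. \<Sum>p<D. A $$ (t div D, p) * ps j $ p * ph j $ (t mod D))"
      by (rule sum.swap)
    also have "\<dots> = (\<Sum>j<D. (\<Sum>p<D. A $$ (t div D, p) * ps j $ p) * ph j $ (t mod D))"
      by (simp add: sum_distrib_right)
    also have "\<dots> = (\<Sum>j<D. (A *\<^sub>v ps j) $ (t div D) * ph j $ (t mod D))"
    proof -
      have "(A *\<^sub>v ps j) $ (t div D) = (\<Sum>p<D. A $$ (t div D, p) * ps j $ p)" if j: "j < D" for j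
        using A ps[OF j] j tdm by (auto simp: scalar_prod_def atLeast0LessThan)
      thus ?thesis by (auto intro!: sum.cong)
    qed
    finally show "(kron A (1\<^sub>m D) *\<^sub>v vec (D * D) (\<lambda>t. \<Sum>j<D. ps j $ (t div D) * ph j $ (t mod D))) $ t
      = vec (D * D) (\<lambda>t. \<Sum>j<D. (A *\<^sub>v ps j) $ (t div D) * ph j $ (t mod D)) $ t" using t by simp
  qed
  show ?thesis unfolding mv1 mv2
    by (rule eq_vecI) (use entry A in \<open>auto simp: kron_def\<close>)
qed

lemma inner_smult: "v \<in> carrier_vec n \<Longrightarrow> w \<in> carrier_vec n \<Longrightarrow> inner (c \<cdot>\<^sub>v v) (c' \<cdot>\<^sub>v w) = cnj c * c' * inner v w"
  unfolding inner_def by (auto simp: sum_distrib_left mult_ac intro!: sum.cong)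

lemma inner_ment: assumes qs: "orthonormal D qs D" and ph: "orthonormal D ph D"
  shows "inner (ment_vec D qs ph) (ment_vec D qs ph) = of_nat D"
proof -
  have qsc: "\<And>j. j < D \<Longrightarrow> qs j \<in> carrier_vec D" and phc: "\<And>j. j < D \<Longrightarrow> ph j \<in> carrier_vec D"
    using qs ph unfolding orthonormal_def by auto
  have "inner (ment_vec D qs ph) (ment_vec D qs ph)
     = (\<Sum>p<D. \<Sum>q<D. cnj (\<Sum>j<D. qs j $ p * ph j $ q) * (\<Sum>j'<D. qs j' $ p * ph j' $ q))"
  proof -
    have mv: "ment_vec D qs ph = vec (D*D) (\<lambda>t. \<Sum>j<D. qs j $ (t div D) * ph j $ (t mod D))"
      by (rule ment_vec_alt[OF qsc phc])
    show ?thesis unfolding mv inner_def by (simp add: sum_pairs div_mod_pair)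
  qed
  also have "\<dots> = (\<Sum>p<D. \<Sum>q<D. \<Sum>j<D. \<Sum>j'<D. cnj (qs j $ p) * qs j' $ p * (cnj (ph j $ q) * ph j' $ q))"
    by (simp add: sum_distrib_left sum_distrib_right mult_ac)
  also have "\<dots> = (\<Sum>p<D. \<Sum>j<D. \<Sum>q<D. \<Sum>j'<D. cnj (qs j $ p) * qs j' $ p * (cnj (ph j $ q) * ph j' $ q))"
    by (rule sum.cong[OF refl], rule sum.swap)
  also have "\<dots> = (\<Sum>p<D. \<Sum>j<D. \<Sum>j'<D. \<Sum>q<D. cnj (qs j $ p) * qs j' $ p * (cnj (ph j $ q) * ph j' $ q))"
    by (rule sum.cong[OF refl], rule sum.cong[OF refl], rule sum.swap)
  also have "\<dots> = (\<Sum>j<D. \<Sum>p<D. \<Sum>j'<D. \<Sum>q<D. cnj (qs j $ p) * qs j' $ p * (cnj (ph j $ q) * ph j' $ q))"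
    by (rule sum.swap)
  also have "\<dots> = (\<Sum>j<D. \<Sum>j'<D. \<Sum>p<D. \<Sum>q<D. cnj (qs j $ p) * qs j' $ p * (cnj (ph j $ q) * ph j' $ q))"
    by (rule sum.cong[OF refl], rule sum.swap)
  also have "\<dots> = (\<Sum>j<D. \<Sum>j'<D. (\<Sum>p<D. cnj (qs j $ p) * qs j' $ p) * (\<Sum>q<D. cnj (ph j $ q) * ph j' $ q))"
    by (simp only: sum_product)
  also have "\<dots> = (\<Sum>j<D. \<Sum>j'<D. inner (qs j) (qs j') * inner (ph j) (ph j'))"
  proof -
    have dq: "\<And>j. j<D \<Longrightarrow> dim_vec (qs j) = D" and dp: "\<And>j. j<D \<Longrightarrow> dim_vec (ph j) = D" using qsc phc by auto
    show ?thesis unfolding inner_def by (auto intro!: sum.cong simp: dq dp)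
  qed
  also have "\<dots> = (\<Sum>j<D. \<Sum>j'<D. if j = j' then 1 else 0)"
    using qs ph unfolding orthonormal_def by (intro sum.cong refl) auto
  also have "\<dots> = of_nat D" by simp
  finally show ?thesis .
qed


lemma greedy_signs:
  fixes r :: "nat \<Rightarrow> real"
  assumes "finite J" "\<And>j. j \<in> J \<Longrightarrow> 0 \<le> r j \<and> r j \<le> R" "0 \<le> R"
  shows "\<exists>e. \<bar>\<Sum>j\<in>J. (if e j then r j else - r j)\<bar> \<le> R"
  using assms
proof (induction J rule: finite_induct)
  case empty thus ?case by simp
next
  case (insert x F)
  then obtain e where e: "\<bar>\<Sum>j\<in>F. (if e j then r j else - r j)\<bar> \<le> R" by auto
  define s where "s = (\<Sum>j\<in>F. (if e j then r j else - r j))"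
  have rx: "0 \<le> r x" "r x \<le> R" using insert.prems by auto
  define e' where "e' = e(x := (s < 0))"
  have "(\<Sum>j\<in>F. (if e' j then r j else - r j)) = s"
    unfolding s_def e'_def using insert.hyps by (intro sum.cong) auto
  hence "(\<Sum>j\<in>insert x F. (if e' j then r j else - r j)) = (if s < 0 then r x else - r x) + s"
    using insert.hyps by (simp add: e'_def)
  moreover have "\<bar>(if s < 0 then r x else - r x) + s\<bar> \<le> R" using e rx unfolding s_def[symmetric] by auto
  ultimately show ?case by metis
qed

lemma polygon_chain:
  fixes r :: "nat \<Rightarrow> real"
  assumes fin: "finite J" and rJ: "\<And>j. j \<in> J \<Longrightarrow> 0 \<le> r j \<and> r j \<le> R" and R: "0 \<le> R"
    and S: "R \<le> (\<Sum>j\<in>J. r j)"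
  shows "\<exists>z. (\<forall>j. cmod (z j) = 1) \<and> cmod (\<Sum>j\<in>J. complex_of_real (r j) * z j) = R"
proof -
  obtain e where e: "\<bar>\<Sum>j\<in>J. (if e j then r j else - r j)\<bar> \<le> R" using greedy_signs[of J r R] fin rJ R by blast
  define h where "h = (\<lambda>t::real. cmod (\<Sum>j\<in>J. complex_of_real (r j) * (if e j then 1 else cis (pi * t))))"
  have h0: "h 0 = (\<Sum>j\<in>J. r j)"
  proof -
    have "(\<Sum>j\<in>J. complex_of_real (r j) * (if e j then 1 else cis (pi * 0))) = complex_of_real (\<Sum>j\<in>J. r j)"
      by (auto intro!: sum.cong)
    moreover have "(\<Sum>j\<in>J. r j) \<ge> 0" using rJ by (simp add: sum_nonneg)
    ultimately show ?thesis unfolding h_def by (simp only: norm_of_real)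
  qed
  have h1: "h 1 = \<bar>\<Sum>j\<in>J. (if e j then r j else - r j)\<bar>"
  proof -
    have "(\<Sum>j\<in>J. complex_of_real (r j) * (if e j then 1 else cis (pi * 1))) = complex_of_real (\<Sum>j\<in>J. (if e j then r j else - r j))"
      by (auto intro!: sum.cong)
    thus ?thesis unfolding h_def by (simp only: norm_of_real)
  qed
  have ci: "continuous_on {0..1} (\<lambda>x. if e j then 1 else cis (pi * x))" for j
    by (cases "e j") (auto intro!: continuous_intros simp: cis_conv_exp)
  have cont: "continuous_on {0..1} h" unfolding h_def by (intro continuous_intros ci)
  obtain t where t: "0 \<le> t" "t \<le> 1" "h t = R"
    using IVT2'[of h 1 R 0, OF _ _ _ cont] h0 h1 e S by auto
  define z where "z = (\<lambda>j. if e j then 1 else cis (pi * t))"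
  have "\<forall>j. cmod (z j) = 1" unfolding z_def by auto
  moreover have "cmod (\<Sum>j\<in>J. complex_of_real (r j) * z j) = R" using t unfolding h_def z_def by simp
  ultimately show ?thesis by blast
qed

lemma polygon:
  fixes r :: "nat \<Rightarrow> real"
  assumes fin: "finite I" and i0: "i0 \<in> I" and rI: "\<And>i. i \<in> I \<Longrightarrow> 0 \<le> r i \<and> r i \<le> r i0"
    and S: "r i0 \<le> (\<Sum>j\<in>I - {i0}. r j)"
  shows "\<exists>z. (\<forall>j. cmod (z j) = 1) \<and> (\<Sum>j\<in>I. complex_of_real (r j) * z j) = 0"
proof -
  let ?R = "r i0" and ?J = "I - {i0}"
  obtain z where z: "\<forall>j. cmod (z j) = 1" "cmod (\<Sum>j\<in>?J. complex_of_real (r j) * z j) = ?R"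
    using polygon_chain[of ?J r ?R] fin rI i0 S by auto
  show ?thesis
  proof (cases "?R = 0")
    case True
    hence "\<And>i. i \<in> I \<Longrightarrow> r i = 0" using rI by force
    thus ?thesis by (intro exI[of _ "\<lambda>_. 1"]) auto
  next
    case False
    define s where "s = (\<Sum>j\<in>?J. complex_of_real (r j) * z j)"
    define z' where "z' = z(i0 := - s / complex_of_real ?R)"
    have "cmod (z' i0) = 1" using z(2) False rI[OF i0] unfolding z'_def s_def by (simp add: norm_divide)
    hence z'1: "\<forall>j. cmod (z' j) = 1" using z(1) unfolding z'_def by auto
    have "(\<Sum>j\<in>I. complex_of_real (r j) * z' j) = complex_of_real ?R * z' i0 + (\<Sum>j\<in>?J. complex_of_real (r j) * z' j)"
      using fin i0 by (simp add: sum.remove)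
    also have "(\<Sum>j\<in>?J. complex_of_real (r j) * z' j) = s" unfolding s_def z'_def by (intro sum.cong) auto
    also have "complex_of_real ?R * z' i0 = - s" using False unfolding z'_def by simp
    finally show ?thesis using z'1 by auto
  qed
qed


lemma onb_complete: assumes onb: "orthonormal_basis D ph" and q: "q < D" and q': "q' < D"
  shows "(\<Sum>l<D. ph l $ q * cnj (ph l $ q')) = (if q = q' then 1 else 0)"
proof -
  have phc: "\<And>j. j < D \<Longrightarrow> ph j \<in> carrier_vec D" and orth: "\<And>j l. j < D \<Longrightarrow> l < D \<Longrightarrow> inner (ph j) (ph l) = (if j = l then 1 else 0)"
    using onb unfolding orthonormal_basis_def orthonormal_def by auto
  define P where "P = mat D D (\<lambda>(q,l). ph l $ q)"
  have Pc: "P \<in> carrier_mat D D" unfolding P_def by simp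
  have "adj P * P = 1\<^sub>m D"
  proof (rule eq_matI)
    fix i j assume "i < dim_row (1\<^sub>m D)" "j < dim_col (1\<^sub>m D)"
    hence ij: "i < D" "j < D" by auto
    have "(adj P * P) $$ (i,j) = (\<Sum>q<D. cnj (ph i $ q) * ph j $ q)"
      using ij Pc unfolding P_def by (auto simp: scalar_prod_def atLeast0LessThan)
    also have "\<dots> = inner (ph i) (ph j)" using phc[OF ij(1)] unfolding inner_def by simp
    finally show "(adj P * P) $$ (i,j) = 1\<^sub>m D $$ (i,j)" using orth[OF ij] ij by simp
  qed (use Pc in auto)
  from mat_mult_left_right_inverse[OF adj_carrier[OF Pc] Pc this] have PP: "P * adj P = 1\<^sub>m D" .
  have "(P * adj P) $$ (q,q') = (\<Sum>l<D. ph l $ q * cnj (ph l $ q'))"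
    using q q' Pc unfolding P_def by (auto simp: scalar_prod_def atLeast0LessThan)
  thus ?thesis using PP q q' by simp
qed

lemma inner_adj: assumes A: "A \<in> carrier_mat r c" and v: "v \<in> carrier_vec c" and u: "u \<in> carrier_vec r"
  shows "inner (A *\<^sub>v v) u = inner v (adj A *\<^sub>v u)"
proof -
  have "inner (A *\<^sub>v v) u = (\<Sum>p<r. \<Sum>a<c. cnj (A $$ (p,a)) * cnj (v $ a) * u $ p)"
    using A v u unfolding inner_def by (auto simp: scalar_prod_def atLeast0LessThan sum_distrib_right intro!: sum.cong)
  also have "\<dots> = (\<Sum>a<c. \<Sum>p<r. cnj (A $$ (p,a)) * cnj (v $ a) * u $ p)" by (rule sum.swap)
  also have "\<dots> = inner v (adj A *\<^sub>v u)"
    using A v u unfolding inner_def by (auto simp: scalar_prod_def atLeast0LessThan sum_distrib_left mult_ac intro!: sum.cong)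
  finally show ?thesis .
qed

lemma inner_iso: assumes A: "A \<in> carrier_mat r c" and AA: "adj A * A = 1\<^sub>m c"
  and v: "v \<in> carrier_vec c" and w: "w \<in> carrier_vec c"
  shows "inner (A *\<^sub>v v) (A *\<^sub>v w) = inner v w"
proof -
  have "inner (A *\<^sub>v v) (A *\<^sub>v w) = inner v (adj A *\<^sub>v (A *\<^sub>v w))" using inner_adj[OF A v] A w by simp
  also have "adj A *\<^sub>v (A *\<^sub>v w) = (adj A * A) *\<^sub>v w" using A w by (simp add: assoc_mult_mat_vec[of _ c r _ c])
  also have "\<dots> = w" using AA w by simp
  finally show ?thesis .
qed

lemma orthonormal_image: assumes A: "A \<in> carrier_mat D D" and AA: "adj A * A = 1\<^sub>m D" and o: "orthonormal D ps D"
  shows "orthonormal D (\<lambda>l. A *\<^sub>v ps l) D"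
  using o inner_iso[OF A AA] A unfolding orthonormal_def by auto


lemma sum_prod_cnj:
  "(\<Sum>g\<in>S. (c * (\<Sum>l\<in>A. f g l)) * cnj (c' * (\<Sum>l'\<in>B. h g l'))) =
   c * cnj c' * (\<Sum>l\<in>A. \<Sum>l'\<in>B. \<Sum>g\<in>S. f g l * cnj (h g l'))"
proof -
  have "(\<Sum>g\<in>S. (c * (\<Sum>l\<in>A. f g l)) * cnj (c' * (\<Sum>l'\<in>B. h g l'))) =
        (\<Sum>g\<in>S. c * cnj c' * (\<Sum>l\<in>A. \<Sum>l'\<in>B. f g l * cnj (h g l')))"
  proof (rule sum.cong[OF refl])
    fix g
    have "(c * (\<Sum>l\<in>A. f g l)) * cnj (c' * (\<Sum>l'\<in>B. h g l')) = c * cnj c' * ((\<Sum>l\<in>A. f g l) * (\<Sum>l'\<in>B. cnj (h g l')))"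
      by (simp only: cnj_sum complex_cnj_mult mult_ac)
    also have "\<dots> = c * cnj c' * (\<Sum>l\<in>A. \<Sum>l'\<in>B. f g l * cnj (h g l'))" by (simp only: sum_product)
    finally show "(c * (\<Sum>l\<in>A. f g l)) * cnj (c' * (\<Sum>l'\<in>B. h g l')) = c * cnj c' * (\<Sum>l\<in>A. \<Sum>l'\<in>B. f g l * cnj (h g l'))" .
  qed
  also have "\<dots> = c * cnj c' * (\<Sum>g\<in>S. \<Sum>l\<in>A. \<Sum>l'\<in>B. f g l * cnj (h g l'))"
    by (rule sum_distrib_left[symmetric])
  also have "(\<Sum>g\<in>S. \<Sum>l\<in>A. \<Sum>l'\<in>B. f g l * cnj (h g l')) = (\<Sum>l\<in>A. \<Sum>g\<in>S. \<Sum>l'\<in>B. f g l * cnj (h g l'))"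
    by (rule sum.swap)
  also have "\<dots> = (\<Sum>l\<in>A. \<Sum>l'\<in>B. \<Sum>g\<in>S. f g l * cnj (h g l'))"
    by (rule sum.cong[OF refl], rule sum.swap)
  finally show ?thesis .
qed

lemma inner_cnj_swap: "dim_vec v = dim_vec w \<Longrightarrow> inner v w = cnj (inner w v)"
  unfolding inner_def by (simp add: mult.commute)

lemma inner_smult_right: "v \<in> carrier_vec n \<Longrightarrow> w \<in> carrier_vec n \<Longrightarrow> inner v (k \<cdot>\<^sub>v w) = k * inner v w"
  unfolding inner_def by (auto simp: sum_distrib_left mult_ac intro!: sum.cong)

lemma outer_mult_vec: assumes "w \<in> carrier_vec N" "v \<in> carrier_vec N"
  shows "outer w w *\<^sub>v v = inner w v \<cdot>\<^sub>v w"
  by (rule eq_vecI) (use assms in \<open>auto simp: outer_def inner_def scalar_prod_def atLeast0LessThan sum_distrib_left mult_ac\<close>)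

lemma inner_outer: assumes w: "w \<in> carrier_vec N" and v: "v \<in> carrier_vec N"
  shows "inner v ((c \<cdot>\<^sub>m outer w w) *\<^sub>v v) = c * complex_of_real ((cmod (inner w v))\<^sup>2)"
proof -
  have "(c \<cdot>\<^sub>m outer w w) *\<^sub>v v = c \<cdot>\<^sub>v (outer w w *\<^sub>v v)"
    by (rule eq_vecI) (use w v in \<open>auto simp: outer_def scalar_prod_def atLeast0LessThan sum_distrib_left mult_ac\<close>)
  also have "\<dots> = (c * inner w v) \<cdot>\<^sub>v w" using outer_mult_vec[OF w v] by (simp add: smult_smult_assoc)
  finally have "inner v ((c \<cdot>\<^sub>m outer w w) *\<^sub>v v) = inner v ((c * inner w v) \<cdot>\<^sub>v w)" by simp
  also have "\<dots> = c * inner w v * inner v w" by (rule inner_smult_right[OF v w])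
  also have "inner v w = cnj (inner w v)" using v w by (intro inner_cnj_swap) simp
  finally show ?thesis by (simp only: complex_norm_square mult.assoc)
qed

lemma psd_outer: assumes w: "w \<in> carrier_vec N" and c: "0 \<le> c"
  shows "psd N (complex_of_real c \<cdot>\<^sub>m outer w w)"
  unfolding psd_def
proof (intro conjI ballI)
  show "complex_of_real c \<cdot>\<^sub>m outer w w \<in> carrier_mat N N" using w by simp
  show "adj (complex_of_real c \<cdot>\<^sub>m outer w w) = complex_of_real c \<cdot>\<^sub>m outer w w"
    by (rule eq_matI) (use w in \<open>auto simp: outer_def\<close>)
  fix v :: "complex vec" assume v: "v \<in> carrier_vec N"
  show "0 \<le> Re (inner v ((complex_of_real c \<cdot>\<^sub>m outer w w) *\<^sub>v v))" using inner_outer[OF w v] c by simp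
  show "Im (inner v ((complex_of_real c \<cdot>\<^sub>m outer w w) *\<^sub>v v)) = 0" using inner_outer[OF w v] by simp
qed


lemma blk_of_lt: assumes "r < blk_off d k" shows "blk_of d r < k"
proof -
  obtain j u where "j < k" "u < d j * d j" "r = blk_off d j + u" using blk_decomp[OF assms] by blast
  thus ?thesis using blk_of_eq[of u d j] by simp
qed

lemma blk_vec_cong: "(\<And>i. i < k \<Longrightarrow> v i = v' i) \<Longrightarrow> blk_vec k d v = blk_vec k d v'"
  unfolding blk_vec_def by (rule eq_vecI) (auto simp: blk_of_lt)

theorem theorem1:
  fixes G :: "('g, 'b) monoid_scheme"
    and n m :: nat
    and U :: "'g \<Rightarrow> complex mat"
    and k :: nat and d :: "nat \<Rightarrow> nat" and Ui :: "nat \<Rightarrow> 'g \<Rightarrow> complex mat"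
    and W :: "complex mat"
    and ps ph :: "nat \<Rightarrow> nat \<Rightarrow> complex vec"
    and a :: "nat \<Rightarrow> complex" and i0 :: nat
  assumes grp: "group G" and fin: "finite (carrier G)"
    and repU: "unitary_rep G n U"
    and irr: "\<And>i. i < k \<Longrightarrow> unitary_rep G (d i) (Ui i) \<and> irreducible_rep G (d i) (Ui i)"
    and ineq: "\<And>i j. i < k \<Longrightarrow> j < k \<Longrightarrow> i \<noteq> j \<Longrightarrow> \<not> equiv_rep G (d i) (Ui i) (d j) (Ui j)"
    and compl: "\<And>D V. irreducible_rep G D V \<Longrightarrow> \<exists>i<k. equiv_rep G D V (d i) (Ui i)"
    and W_unitary: "W \<in> carrier_mat (blk_off d k) (n * m)"
      "W * adj W = 1\<^sub>m (blk_off d k)" "adj W * W = 1\<^sub>m (n * m)"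
    and W_intertw: "\<And>g. g \<in> carrier G \<Longrightarrow>
       W * kron (U g) (1\<^sub>m m) = blk_diag k d (\<lambda>i. kron (Ui i g) (1\<^sub>m (d i))) * W"
    and onb: "\<And>i. i < k \<Longrightarrow> orthonormal_basis (d i) (ps i) \<and> orthonormal_basis (d i) (ph i)"
    and norm: "(\<Sum>i<k. (cmod (a i))\<^sup>2) = 1"
    and i0: "i0 < k" "\<And>i. i < k \<Longrightarrow> real (d i) * cmod (a i) \<le> real (d i0) * cmod (a i0)"
    and cond: "real (d i0) * cmod (a i0) \<le> (\<Sum>i\<in>{..<k} - {i0}. real (d i) * cmod (a i))"
  shows "let psi = adj W *\<^sub>v blk_vec k d (\<lambda>i. (a i / complex_of_real (sqrt (real (d i))))
                       \<cdot>\<^sub>v ment_vec (d i) (ps i) (ph i));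
             u = (\<lambda>g. kron (U g) (1\<^sub>m m) *\<^sub>v psi)
         in \<exists>M :: 'g \<Rightarrow> complex mat.
              (\<forall>g\<in>carrier G. psd (n * m) (M g)) \<and>
              (\<forall>r<n * m. \<forall>s<n * m. (\<Sum>g\<in>carrier G. M g $$ (r, s)) = (if r = s then 1 else 0)) \<and>
              (\<forall>g\<in>carrier G. inner (u g) (M g *\<^sub>v u g) = 0)"
proof -
  let ?L = "blk_off d k"
  let ?N = "n * m"
  let ?G = "card (carrier G)"
  have dpos: "d i > 0" if "i < k" for i using irr[OF that] unfolding irreducible_rep_def by blast
  have Urep: "unitary_rep G (d i) (Ui i)" if "i < k" for i using irr[OF that] by blast
  have Uirr: "irreducible_rep G (d i) (Ui i)" if "i < k" for i using irr[OF that] by blast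
  have Uc: "Ui i g \<in> carrier_mat (d i) (d i)" if "i < k" "g \<in> carrier G" for i g
    by (rule urep_facts(1)[OF Urep[OF that(1)] that(2)])
  have Uu: "adj (Ui i g) * Ui i g = 1\<^sub>m (d i)" if "i < k" "g \<in> carrier G" for i g
    by (rule urep_facts(2)[OF Urep[OF that(1)] that(2)])
  have ops: "\<And>i. i < k \<Longrightarrow> orthonormal (d i) (ps i) (d i)" and oph: "\<And>i. i < k \<Longrightarrow> orthonormal (d i) (ph i) (d i)"
    using onb unfolding orthonormal_basis_def by blast+
  have psc: "\<And>i l. i < k \<Longrightarrow> l < d i \<Longrightarrow> ps i l \<in> carrier_vec (d i)"
    and phc: "\<And>i l. i < k \<Longrightarrow> l < d i \<Longrightarrow> ph i l \<in> carrier_vec (d i)"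
    using ops oph unfolding orthonormal_def by blast+
  have Ups: "\<And>i g. i < k \<Longrightarrow> g \<in> carrier G \<Longrightarrow> orthonormal (d i) (\<lambda>l. Ui i g *\<^sub>v ps i l) (d i)"
    using orthonormal_image[OF Uc Uu ops] by blast
  have Upsc: "Ui i g *\<^sub>v ps i l \<in> carrier_vec (d i)" if "i < k" "g \<in> carrier G" "l < d i" for i g l
    using Uc[OF that(1,2)] psc[OF that(1,3)] by simp
  define B where "B = (\<lambda>g. blk_diag k d (\<lambda>i. kron (Ui i g) (1\<^sub>m (d i))))"
  define cs where "cs = (\<lambda>i. complex_of_real (sqrt (real (d i))))"
  have Bc: "\<And>g. B g \<in> carrier_mat ?L ?L" unfolding B_def by simp
  have Bmv: "B g *\<^sub>v blk_vec k d (\<lambda>i. c i \<cdot>\<^sub>v ment_vec (d i) (ps i) (ph i))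
      = blk_vec k d (\<lambda>i. c i \<cdot>\<^sub>v ment_vec (d i) (\<lambda>l. Ui i g *\<^sub>v ps i l) (ph i))" if g: "g \<in> carrier G" for g c
  proof -
    have kc: "kron (Ui i g) (1\<^sub>m (d i)) \<in> carrier_mat (d i * d i) (d i * d i)" if i: "i < k" for i
      using Uc[OF i g] unfolding kron_def by auto
    show ?thesis unfolding B_def
      by (subst blk_mult[OF kc]) (auto intro!: blk_vec_cong simp: mult_mat_vec[OF kc] kron_ment[OF Uc[OF _ g] psc phc])
  qed
  define rr where "rr = (\<lambda>i. real (d i) * cmod (a i))"
  obtain wz where wz1: "\<forall>j. cmod (wz j) = 1" and wzs: "(\<Sum>j\<in>{..<k}. complex_of_real (rr j) * wz j) = 0"
  proof -
    have "\<exists>z. (\<forall>j. cmod (z j) = 1) \<and> (\<Sum>j\<in>{..<k}. complex_of_real (rr j) * z j) = 0"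
      by (rule polygon) (use i0 cond in \<open>auto simp: rr_def\<close>)
    thus ?thesis using that by blast
  qed
  define zz where "zz = (\<lambda>i. if a i = 0 then 1 else cnj (wz i) * (a i / complex_of_real (cmod (a i))))"
  have zz1: "cmod (zz i) = 1" for i
    using wz1 unfolding zz_def by (auto simp: norm_mult norm_divide)
  have zzsum: "(\<Sum>i<k. cnj (zz i) * a i * of_nat (d i)) = 0"
  proof -
    have "cnj (zz i) * a i * of_nat (d i) = complex_of_real (rr i) * wz i" for i
    proof (cases "a i = 0")
      case True thus ?thesis unfolding zz_def rr_def by simp
    next
      case False
      have "cnj (a i) * a i = complex_of_real ((cmod (a i))\<^sup>2)" by (rule cnj_mult_self)
      hence "cnj (zz i) * a i = wz i * complex_of_real (cmod (a i))"
        using False unfolding zz_def by (simp add: power2_eq_square field_simps)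
      thus ?thesis unfolding rr_def by (simp add: mult_ac)
    qed
    thus ?thesis using wzs by simp
  qed
  define x where "x = blk_vec k d (\<lambda>i. (a i / complex_of_real (sqrt (real (d i)))) \<cdot>\<^sub>v ment_vec (d i) (ps i) (ph i))"
  define y where "y = blk_vec k d (\<lambda>i. (cs i * zz i) \<cdot>\<^sub>v ment_vec (d i) (ps i) (ph i))"
  define w where "w = (\<lambda>g. adj W *\<^sub>v (B g *\<^sub>v y))"
  define M where "M = (\<lambda>g. complex_of_real (1 / real ?G) \<cdot>\<^sub>m outer (w g) (w g))"
  have Wc: "W \<in> carrier_mat ?L ?N" by (rule W_unitary(1))
  have aWc: "adj W \<in> carrier_mat ?N ?L" using Wc by simp
  have wc: "w g \<in> carrier_vec ?N" for g unfolding w_def carrier_vec_def using Wc by auto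
  have xc: "x \<in> carrier_vec ?L" unfolding x_def by simp
  have Gpos: "?G > 0" using fin group.is_monoid[OF grp] monoid.one_closed card_gt_0_iff by blast
  have uform: "kron (U g) (1\<^sub>m m) *\<^sub>v (adj W *\<^sub>v x) = adj W *\<^sub>v (B g *\<^sub>v x)" if g: "g \<in> carrier G" for g
  proof -
    let ?K = "kron (U g) (1\<^sub>m m)"
    have Ug: "U g \<in> carrier_mat n n" using repU g unfolding unitary_rep_def mat_rep_def by blast
    have Kc: "?K \<in> carrier_mat ?N ?N" using Ug unfolding kron_def by auto
    have "?K = (adj W * W) * ?K" using Kc W_unitary(3) by simp
    also have "\<dots> = adj W * (W * ?K)" using aWc Wc Kc by (simp add: assoc_mult_mat[of _ ?N ?L _ ?N _ ?N])
    also have "W * ?K = B g * W" using W_intertw[OF g] unfolding B_def by simp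
    finally have K: "?K = adj W * (B g * W)" .
    have "?K *\<^sub>v (adj W *\<^sub>v x) = adj W *\<^sub>v ((B g * W) *\<^sub>v (adj W *\<^sub>v x))"
      unfolding K using aWc Wc Bc[of g] xc mult_mat_vec_carrier[OF aWc xc] by (subst assoc_mult_mat_vec[of _ ?N ?L _ ?N]) auto
    also have "(B g * W) *\<^sub>v (adj W *\<^sub>v x) = B g *\<^sub>v (W *\<^sub>v (adj W *\<^sub>v x))"
      using aWc Wc Bc[of g] xc mult_mat_vec_carrier[OF aWc xc] by (subst assoc_mult_mat_vec[of _ ?L ?L _ ?N]) auto
    also have "W *\<^sub>v (adj W *\<^sub>v x) = (W * adj W) *\<^sub>v x"
      using aWc Wc xc by (subst assoc_mult_mat_vec[of _ ?L ?N _ ?L]) auto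
    also have "\<dots> = x" using W_unitary(2) xc by simp
    finally show ?thesis .
  qed
  have csr: "cnj (cs i) = cs i" for i unfolding cs_def by simp
  have csnz: "cs i \<noteq> 0" if "i < k" for i unfolding cs_def using dpos[OF that] by simp
  have cs2: "cs i * cs i = of_nat (d i)" for i unfolding cs_def
    by (simp flip: of_real_mult) 
  have Bx: "B g *\<^sub>v x = blk_vec k d (\<lambda>i. (a i / cs i) \<cdot>\<^sub>v ment_vec (d i) (\<lambda>l. Ui i g *\<^sub>v ps i l) (ph i))"
    if g: "g \<in> carrier G" for g unfolding x_def cs_def by (rule Bmv[OF g])
  have By: "B g *\<^sub>v y = blk_vec k d (\<lambda>i. (cs i * zz i) \<cdot>\<^sub>v ment_vec (d i) (\<lambda>l. Ui i g *\<^sub>v ps i l) (ph i))"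
    if g: "g \<in> carrier G" for g unfolding y_def by (rule Bmv[OF g])
  have inner0: "inner (w g) (adj W *\<^sub>v (B g *\<^sub>v x)) = 0" if g: "g \<in> carrier G" for g
  proof -
    have aa: "adj (adj W) * adj W = 1\<^sub>m ?L" using W_unitary(2) by simp
    have "inner (w g) (adj W *\<^sub>v (B g *\<^sub>v x)) = inner (B g *\<^sub>v y) (B g *\<^sub>v x)"
      unfolding w_def by (rule inner_iso[OF aWc aa]) (use Bc[of g] xc in \<open>auto simp: y_def\<close>)
    also have "\<dots> = (\<Sum>i<k. inner ((cs i * zz i) \<cdot>\<^sub>v ment_vec (d i) (\<lambda>l. Ui i g *\<^sub>v ps i l) (ph i))
                              ((a i / cs i) \<cdot>\<^sub>v ment_vec (d i) (\<lambda>l. Ui i g *\<^sub>v ps i l) (ph i)))"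
      unfolding By[OF g] Bx[OF g] by (rule inner_blk) simp
    also have "\<dots> = (\<Sum>i<k. cnj (zz i) * a i * of_nat (d i))"
    proof (rule sum.cong[OF refl])
      fix i assume "i \<in> {..<k}" hence i: "i < k" by simp
      have "inner ((cs i * zz i) \<cdot>\<^sub>v ment_vec (d i) (\<lambda>l. Ui i g *\<^sub>v ps i l) (ph i))
                  ((a i / cs i) \<cdot>\<^sub>v ment_vec (d i) (\<lambda>l. Ui i g *\<^sub>v ps i l) (ph i))
           = cnj (cs i * zz i) * (a i / cs i) * of_nat (d i)"
        by (subst inner_smult[OF ment_vec_carrier ment_vec_carrier]) (simp add: inner_ment[OF Ups[OF i g] oph[OF i]])
      also have "\<dots> = cnj (zz i) * a i * of_nat (d i)" using csnz[OF i] csr[of i] by (simp add: field_simps)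
      finally show "inner ((cs i * zz i) \<cdot>\<^sub>v ment_vec (d i) (\<lambda>l. Ui i g *\<^sub>v ps i l) (ph i))
                  ((a i / cs i) \<cdot>\<^sub>v ment_vec (d i) (\<lambda>l. Ui i g *\<^sub>v ps i l) (ph i)) = cnj (zz i) * a i * of_nat (d i)" .
    qed
    also have "\<dots> = 0" by (rule zzsum)
    finally show ?thesis .
  qed
  have Byent: "(B g *\<^sub>v y) $ (blk_off d i + t) = cs i * zz i * (\<Sum>l<d i. (Ui i g *\<^sub>v ps i l) $ (t div d i) * ph i l $ (t mod d i))"
    if g: "g \<in> carrier G" and i: "i < k" and t: "t < d i * d i" for g i t
  proof -
    have mv: "ment_vec (d i) (\<lambda>l. Ui i g *\<^sub>v ps i l) (ph i) = vec (d i * d i) (\<lambda>t. \<Sum>l<d i. (Ui i g *\<^sub>v ps i l) $ (t div d i) * ph i l $ (t mod d i))"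
      by (rule ment_vec_alt) (use Upsc[OF i g] phc[OF i] in auto)
    show ?thesis unfolding By[OF g] blk_vec_index[where d=d, OF i t] mv using t by simp
  qed
  have zzn: "zz i * cnj (zz i) = 1" for i using zz1[of i] by (simp add: complex_norm_square[symmetric])
  have key: "(\<Sum>g\<in>carrier G. (B g *\<^sub>v y) $ r * cnj ((B g *\<^sub>v y) $ s)) = (if r = s then of_nat ?G else 0)"
    if r: "r < ?L" and s: "s < ?L" for r s
  proof -
    obtain i t where i: "i < k" and t: "t < d i * d i" and rit: "r = blk_off d i + t" using blk_decomp[OF r] by blast
    obtain j t' where j: "j < k" and t': "t' < d j * d j" and sjt: "s = blk_off d j + t'" using blk_decomp[OF s] by blast
    define p where "p = t div d i" define q where "q = t mod d i"
    define p' where "p' = t' div d j" define q' where "q' = t' mod d j"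
    have pq: "p < d i" "q < d i" "p' < d j" "q' < d j"
      unfolding p_def q_def p'_def q'_def using t t' dpos[OF i] dpos[OF j]
      by (auto simp: less_mult_imp_div_less)
    let ?f = "\<lambda>g l. (Ui i g *\<^sub>v ps i l) $ p * ph i l $ q"
    let ?h = "\<lambda>g l. (Ui j g *\<^sub>v ps j l) $ p' * ph j l $ q'"
    let ?S = "\<lambda>l l'. (\<Sum>g\<in>carrier G. (Ui i g *\<^sub>v ps i l) $ p * cnj ((Ui j g *\<^sub>v ps j l') $ p'))"
    have "(\<Sum>g\<in>carrier G. (B g *\<^sub>v y) $ r * cnj ((B g *\<^sub>v y) $ s))
       = (\<Sum>g\<in>carrier G. (cs i * zz i * (\<Sum>l<d i. ?f g l)) * cnj (cs j * zz j * (\<Sum>l'<d j. ?h g l')))"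
      unfolding rit sjt p_def q_def p'_def q'_def by (rule sum.cong[OF refl]) (simp add: Byent i j t t')
    also have "\<dots> = cs i * zz i * cnj (cs j * zz j) * (\<Sum>l<d i. \<Sum>l'<d j. \<Sum>g\<in>carrier G. ?f g l * cnj (?h g l'))"
      by (rule sum_prod_cnj)
    also have "\<dots> = cs i * zz i * cnj (cs j * zz j) * (\<Sum>l<d i. \<Sum>l'<d j. ph i l $ q * cnj (ph j l' $ q') * ?S l l')"
      by (simp add: sum_distrib_left mult_ac)
    finally have expand: "(\<Sum>g\<in>carrier G. (B g *\<^sub>v y) $ r * cnj ((B g *\<^sub>v y) $ s))
       = cs i * zz i * cnj (cs j * zz j) * (\<Sum>l<d i. \<Sum>l'<d j. ph i l $ q * cnj (ph j l' $ q') * ?S l l')" .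
    show ?thesis
    proof (cases "i = j")
      case False
      have "?S l l' = 0" if l: "l < d i" and l': "l' < d j" for l l'
        by (rule ortho_diff[OF grp Urep[OF i] Uirr[OF i] Urep[OF j] Uirr[OF j] ineq[OF j i] psc[OF i l] psc[OF j l'] pq(1) pq(3)])
          (use False in auto)
      hence "(\<Sum>g\<in>carrier G. (B g *\<^sub>v y) $ r * cnj ((B g *\<^sub>v y) $ s)) = 0" unfolding expand by simp
      moreover have "r \<noteq> s" using False blk_of_eq[of t d i] blk_of_eq[of t' d j] t t' rit sjt by auto
      ultimately show ?thesis by simp
    next
      case True
      have S: "?S l l' = (if p = p' then (if l' = l then of_nat ?G / of_nat (d i) else 0) else 0)"
        if l: "l < d i" and l': "l' < d i" for l l'
      proof -
        have "?S l l' = (if p = p' then of_nat ?G * inner (ps i l') (ps i l) / of_nat (d i) else 0)"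
          using ortho_same[OF grp fin Urep[OF i] Uirr[OF i] psc[OF i l] psc[OF i l'] pq(1)] pq True by simp
        thus ?thesis using ops[OF i] l l' unfolding orthonormal_def by auto
      qed
      have "(\<Sum>l<d i. \<Sum>l'<d i. ph i l $ q * cnj (ph i l' $ q') * ?S l l')
          = (\<Sum>l<d i. if p = p' then ph i l $ q * cnj (ph i l $ q') * (of_nat ?G / of_nat (d i)) else 0)"
      proof (rule sum.cong[OF refl])
        fix l assume "l \<in> {..<d i}" hence l: "l < d i" by simp
        have "(\<Sum>l'<d i. ph i l $ q * cnj (ph i l' $ q') * ?S l l')
            = (\<Sum>l'<d i. if l' = l then (if p = p' then ph i l $ q * cnj (ph i l $ q') * (of_nat ?G / of_nat (d i)) else 0) else 0)"
          by (rule sum.cong[OF refl]) (use S l in auto)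
        also have "\<dots> = (if p = p' then ph i l $ q * cnj (ph i l $ q') * (of_nat ?G / of_nat (d i)) else 0)"
          using l by simp
        finally show "(\<Sum>l'<d i. ph i l $ q * cnj (ph i l' $ q') * ?S l l')
            = (if p = p' then ph i l $ q * cnj (ph i l $ q') * (of_nat ?G / of_nat (d i)) else 0)" .
      qed
      also have "\<dots> = (if p = p' then (\<Sum>l<d i. ph i l $ q * cnj (ph i l $ q')) * (of_nat ?G / of_nat (d i)) else 0)"
        by (simp only: sum_distrib_right if_distrib) simp
      also have "\<dots> = (if p = p' \<and> q = q' then of_nat ?G / of_nat (d i) else 0)"
      proof -
        have oc: "(\<Sum>l<d i. ph i l $ q * cnj (ph i l $ q')) = (if q = q' then 1 else 0)"
          using onb_complete[of "d i" "ph i" q q'] onb[OF i] pq True by simp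
        show ?thesis unfolding oc by (cases "p = p'"; cases "q = q'") simp_all
      qed
      finally have inner_sum: "(\<Sum>l<d i. \<Sum>l'<d i. ph i l $ q * cnj (ph i l' $ q') * ?S l l')
          = (if p = p' \<and> q = q' then of_nat ?G / of_nat (d i) else 0)" .
      have pre: "cs i * zz i * cnj (cs i * zz i) = of_nat (d i)"
        using cs2[of i] csr[of i] zzn[of i] by (simp add: mult_ac)
      have "(\<Sum>g\<in>carrier G. (B g *\<^sub>v y) $ r * cnj ((B g *\<^sub>v y) $ s)) = (if p = p' \<and> q = q' then of_nat ?G else 0)"
        unfolding expand using True inner_sum pre dpos[OF i] by simp
      moreover have "(r = s) = (p = p' \<and> q = q')"
      proof -
        have "t = p * d i + q" "t' = p' * d i + q'" unfolding p_def q_def p'_def q'_def using True by simp_all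
        hence "(t = t') = (p = p' \<and> q = q')" using pq True by (metis div_mod_pair)
        thus ?thesis unfolding rit sjt using True by simp
      qed
      ultimately show ?thesis by simp
    qed
  qed
  have sumM: "(\<Sum>g\<in>carrier G. M g $$ (r, s)) = (if r = s then 1 else 0)" if r: "r < ?N" and s: "s < ?N" for r s
  proof -
    let ?Y = "\<lambda>g. B g *\<^sub>v y"
    have Yc: "?Y g \<in> carrier_vec ?L" for g using Bc[of g] unfolding y_def by simp
    have aWv: "(adj W *\<^sub>v v) $ r' = (\<Sum>a<?L. cnj (W $$ (a, r')) * v $ a)" if "r' < ?N" "v \<in> carrier_vec ?L" for v r'
      using that Wc by (auto simp: scalar_prod_def atLeast0LessThan)
    have went: "w g $ r' = (\<Sum>a<?L. cnj (W $$ (a, r')) * ?Y g $ a)" if "r' < ?N" for g r'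
      unfolding w_def by (rule aWv[OF that Yc])
    have "(\<Sum>g\<in>carrier G. M g $$ (r, s)) = complex_of_real (1 / real ?G) * (\<Sum>g\<in>carrier G. w g $ r * cnj (w g $ s))"
    proof -
      have "M g $$ (r, s) = complex_of_real (1 / real ?G) * (w g $ r * cnj (w g $ s))" for g
        using r s wc[of g] unfolding M_def outer_def by simp
      thus ?thesis by (simp only: sum_distrib_left)
    qed
    also have "(\<Sum>g\<in>carrier G. w g $ r * cnj (w g $ s))
       = (\<Sum>g\<in>carrier G. (1 * (\<Sum>a<?L. cnj (W $$ (a, r)) * ?Y g $ a)) * cnj (1 * (\<Sum>b<?L. cnj (W $$ (b, s)) * ?Y g $ b)))"
      using went r s by simp
    also have "\<dots> = 1 * cnj 1 * (\<Sum>a<?L. \<Sum>b<?L. \<Sum>g\<in>carrier G. (cnj (W $$ (a, r)) * ?Y g $ a) * cnj (cnj (W $$ (b, s)) * ?Y g $ b))"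
      by (rule sum_prod_cnj)
    also have "\<dots> = (\<Sum>a<?L. \<Sum>b<?L. cnj (W $$ (a, r)) * W $$ (b, s) * (\<Sum>g\<in>carrier G. ?Y g $ a * cnj (?Y g $ b)))"
      by (simp add: sum_distrib_left mult_ac)
    also have "\<dots> = (\<Sum>a<?L. \<Sum>b<?L. if a = b then cnj (W $$ (a, r)) * W $$ (a, s) * of_nat ?G else 0)"
      by (intro sum.cong refl) (simp add: key)
    also have "\<dots> = (\<Sum>a<?L. cnj (W $$ (a, r)) * W $$ (a, s)) * of_nat ?G"
      by (simp add: sum_distrib_right)
    also have "(\<Sum>a<?L. cnj (W $$ (a, r)) * W $$ (a, s)) = (adj W * W) $$ (r, s)"
      using Wc r s by (auto simp: scalar_prod_def atLeast0LessThan)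
    also have "\<dots> = (if r = s then 1 else 0)" using W_unitary(3) r s by simp
    finally show ?thesis using Gpos by (cases "r = s") simp_all
  qed
  show ?thesis unfolding Let_def x_def[symmetric]
  proof (intro exI[of _ M] conjI ballI allI impI)
    fix g assume g: "g \<in> carrier G"
    show "psd ?N (M g)" unfolding M_def by (rule psd_outer[OF wc]) simp
    have v: "adj W *\<^sub>v (B g *\<^sub>v x) \<in> carrier_vec ?N" using aWc Bc[of g] xc by simp
    show "inner (kron (U g) (1\<^sub>m m) *\<^sub>v (adj W *\<^sub>v x)) (M g *\<^sub>v (kron (U g) (1\<^sub>m m) *\<^sub>v (adj W *\<^sub>v x))) = 0"
      unfolding uform[OF g] M_def inner_outer[OF wc v] inner0[OF g] by simp
  next
    fix r s assume "r < ?N" "s < ?N"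
    thus "(\<Sum>g\<in>carrier G. M g $$ (r, s)) = (if r = s then 1 else 0)" by (rule sumM)
  qed
qed

end
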